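(* Let $\gamma>0$, $a,b,c,d>0$ and $\rho>1/2$. Let $(x_n)$ and $(y_n)$ be sequences of positive real numbers satisfying, for all $n$, $$x_{n+1}-x_n\le-\gamma a\,x_n^{1+\rho}y_n^{-\rho}+\gamma b\,x_n,\qquad y_{n+1}-y_n\le-\gamma c\,x_n^\rho y_n^{1-\rho}+\gamma d\sqrt{x_ny_n}.$$ Assume further that $$x_k\ge\Big(\frac dc\Big)^{\frac{2}{2\rho-1}}y_0\quad\text{and}\quad x_k\ge\Big(2\frac ba\Big)^{\frac1\rho}y_0\qquad\text{for all }k=0,\dots,n-1.$$ Then $x_n\le e^{-\gamma bn}x_0$ and $y_n\le y_0$. *)

theory Defs
  imports Complex_Main
begin

end

theory Submission
  imports Defs
begin

theorem lemma3p3: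
  fixes \<gamma> a b c d \<rho> :: real and x y :: "nat \<Rightarrow> real" and n :: nat
  assumes "\<gamma> > 0" "a > 0" "b > 0" "c > 0" "d > 0" "\<rho> > 1/2"
    and "\<And>m. x m > 0" "\<And>m. y m > 0"
    and "\<And>m. x (Suc m) - x m \<le> - \<gamma> * a * x m powr (1 + \<rho>) * y m powr (- \<rho>) + \<gamma> * b * x m"
    and "\<And>m. y (Suc m) - y m \<le> - \<gamma> * c * x m powr \<rho> * y m powr (1 - \<rho>) + \<gamma> * d * sqrt (x m * y m)"
    and "\<And>k. k < n \<Longrightarrow> x k \<ge> (d / c) powr (2 / (2 * \<rho> - 1)) * y 0"
    and "\<And>k. k < n \<Longrightarrow> x k \<ge> (2 * (b / a)) powr (1 / \<rho>) * y 0"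
  shows "x n \<le> exp (- \<gamma> * b * real n) * x 0 \<and> y n \<le> y 0"
proof -
  note g = assms(1) and pa = assms(2) and pb = assms(3) and pc = assms(4) and pd = assms(5)
    and rh = assms(6) and xp = assms(7) and yp = assms(8) and rx = assms(9) and ry = assms(10)
    and hD = assms(11) and hE = assms(12)
  define D where "D = (d / c) powr (2 / (2 * \<rho> - 1))"
  define E where "E = (2 * (b / a)) powr (1 / \<rho>)"
  have Dpos: "D > 0" using pc pd by (simp add: D_def)
  have Epos: "E > 0" using pa pb by (simp add: E_def)
  have DD: "D powr (\<rho> - 1/2) = d / c"
  proof -
    have "2 / (2 * \<rho> - 1) * (\<rho> - 1/2) = 1" using rh by (simp add: field_simps)
    thus ?thesis unfolding D_def using pc pd by (simp add: powr_powr)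
  qed
  have EE: "E powr \<rho> = 2 * (b / a)"
  proof -
    have "1 / \<rho> * \<rho> = 1" using rh by simp
    thus ?thesis unfolding E_def using pa pb by (simp add: powr_powr)
  qed
  have key1: "x m powr \<rho> * y m powr (1 - \<rho>) = y m * (x m / y m) powr \<rho>" for m
    using xp[of m] yp[of m] by (simp add: powr_divide powr_diff)
  have key2: "sqrt (x m * y m) = y m * (x m / y m) powr (1/2)" for m
  proof -
    have "x m * y m = (x m / y m) * (y m)^2" using yp[of m] by (simp add: power2_eq_square)
    hence "sqrt (x m * y m) = sqrt (x m / y m) * sqrt ((y m)^2)"
      by (metis real_sqrt_mult)
    hence "sqrt (x m * y m) = sqrt (x m / y m) * y m"
      using yp[of m] by simp
    thus ?thesis using xp[of m] yp[of m] by (simp add: powr_half_sqrt)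
  qed
  have key3: "x m powr (1 + \<rho>) * y m powr (- \<rho>) = x m * (x m / y m) powr \<rho>" for m
  proof -
    have "(x m / y m) powr \<rho> = x m powr \<rho> / y m powr \<rho>"
      using xp[of m] yp[of m] by (simp add: powr_divide)
    moreover have "x m powr (1 + \<rho>) = x m * x m powr \<rho>"
      using xp[of m] by (simp add: powr_add)
    moreover have "y m powr (- \<rho>) = 1 / y m powr \<rho>"
      by (simp add: powr_minus_divide)
    ultimately show ?thesis by simp
  qed
  have Y: "k \<le> n \<Longrightarrow> y k \<le> y 0" for k
  proof (induction k)
    case 0 then show ?case by simp
  next
    case (Suc k)
    hence kn: "k < n" and yk: "y k \<le> y 0" by auto
    define r where "r = x k / y k"
    have rpos: "r > 0" using xp yp by (simp add: r_def)
    have "D * y k \<le> D * y 0" using yk Dpos by simp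
    also have "\<dots> \<le> x k" using hD[OF kn] by (simp add: D_def)
    finally have "D \<le> r" using yp[of k] by (simp add: r_def field_simps)
    hence "D powr (\<rho> - 1/2) \<le> r powr (\<rho> - 1/2)" using Dpos rh by (intro powr_mono2) auto
    hence dc: "d / c \<le> r powr (\<rho> - 1/2)" using DD by simp
    have "r powr \<rho> = r powr (1/2) * r powr (\<rho> - 1/2)" by (simp add: powr_add[symmetric])
    moreover have "d \<le> c * r powr (\<rho> - 1/2)" using dc pc by (simp add: pos_divide_le_eq mult.commute)
    then have "d * r powr (1/2) \<le> c * r powr (\<rho> - 1/2) * r powr (1/2)" by (rule mult_right_mono) simp
    ultimately have "d * r powr (1/2) \<le> c * r powr \<rho>" by (simp add: mult_ac)
    hence "\<gamma> * d * (y k * r powr (1/2)) \<le> \<gamma> * c * (y k * r powr \<rho>)"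
      using g yp[of k] by (simp add: mult_left_mono mult.assoc mult.left_commute)
    moreover have "\<gamma> * c * x k powr \<rho> * y k powr (1 - \<rho>) = \<gamma> * c * (y k * r powr \<rho>)"
      using key1[of k] unfolding r_def by (simp add: mult.assoc)
    moreover have "\<gamma> * d * sqrt (x k * y k) = \<gamma> * d * (y k * r powr (1/2))"
      using key2[of k] unfolding r_def by simp
    ultimately have "y (Suc k) \<le> y k"
      using ry[of k] by linarith
    then show ?case using yk by simp
  qed
  have X: "k \<le> n \<Longrightarrow> x k \<le> exp (- \<gamma> * b * real k) * x 0" for k
  proof (induction k)
    case 0 then show ?case by simp
  next
    case (Suc k)
    hence kn: "k < n" and xk: "x k \<le> exp (- \<gamma> * b * real k) * x 0" by auto
    define r where "r = x k / y k"
    have rpos: "r > 0" using xp yp by (simp add: r_def)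
    have yk: "y k \<le> y 0" using Y kn by simp
    have "E * y k \<le> E * y 0" using yk Epos by simp
    also have "\<dots> \<le> x k" using hE[OF kn] by (simp add: E_def)
    finally have "E \<le> r" using yp[of k] by (simp add: r_def field_simps)
    hence "E powr \<rho> \<le> r powr \<rho>" using Epos rh by (intro powr_mono2) auto
    hence "2 * (b / a) \<le> r powr \<rho>" using EE by simp
    hence "2 * b \<le> a * r powr \<rho>" using pa by (simp add: field_simps)
    hence "\<gamma> * (2 * b) * x k \<le> \<gamma> * (a * r powr \<rho>) * x k"
      using g xp[of k] by (intro mult_right_mono mult_left_mono) auto
    moreover have "\<gamma> * a * x k powr (1 + \<rho>) * y k powr (- \<rho>) = \<gamma> * (a * r powr \<rho>) * x k"
      using key3[of k] unfolding r_def by (simp add: mult_ac)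
    moreover have "(1 - \<gamma> * b) * x k = x k - \<gamma> * (2 * b) * x k + \<gamma> * b * x k"
      by (simp add: algebra_simps)
    ultimately have "x (Suc k) \<le> (1 - \<gamma> * b) * x k"
      using rx[of k] by linarith
    also have "\<dots> \<le> exp (- \<gamma> * b) * x k"
      using xp[of k] exp_ge_add_one_self[of "- \<gamma> * b"] by (intro mult_right_mono) auto
    also have "\<dots> \<le> exp (- \<gamma> * b) * (exp (- \<gamma> * b * real k) * x 0)"
      using xk by (intro mult_left_mono) auto
    also have "\<dots> = exp (- \<gamma> * b * real (Suc k)) * x 0"
    proof -
      have "- \<gamma> * b * real (Suc k) = - \<gamma> * b + - \<gamma> * b * real k" by (simp add: algebra_simps)
      hence "exp (- \<gamma> * b * real (Suc k)) = exp (- \<gamma> * b) * exp (- \<gamma> * b * real k)"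
        by (metis exp_add)
      thus ?thesis by simp
    qed
    finally show ?case .
  qed
  show ?thesis using X Y by simp
qed

end
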